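(* If $t\in[1/2,1]$, then $w_1(t,a)<w_3(t,a)$ and $w(t,a)/W(t,a)\le 24/35$ for all $a\in[(3t+2)/4,2]$.
   Context: For $(t,a)\in\mathbb R^2$ define $w_1(t,a)=(2t+3)a-(3t^2/4+t)$, $w_2(t,a)=(4t+4)a-(3t^2/2+2t+2)$, $w_3(t,a)=8ta-(3t^2+4t-4)$, $W(t,a)=[(t+2)a-(t^2/2+t)](t+2)$, and $w(t,a)=\min\{w_1(t,a),w_2(t,a),w_3(t,a)\}$. *)

theory Defs
  imports Complex_Main
begin

definition w1 :: "real \<Rightarrow> real \<Rightarrow> real" where
  "w1 t a = (2*t+3)*a - (3*t^2/4 + t)"

definition w2 :: "real \<Rightarrow> real \<Rightarrow> real" where
  "w2 t a = (4*t+4)*a - (3*t^2/2 + 2*t + 2)"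

definition w3 :: "real \<Rightarrow> real \<Rightarrow> real" where
  "w3 t a = 8*t*a - (3*t^2 + 4*t - 4)"

definition WW :: "real \<Rightarrow> real \<Rightarrow> real" where
  "WW t a = ((t+2)*a - (t^2/2 + t)) * (t+2)"

definition w :: "real \<Rightarrow> real \<Rightarrow> real" where
  "w t a = min (w1 t a) (min (w2 t a) (w3 t a))"

end

theory Submission
  imports Defs
begin

lemma p_nonneg:
  fixes t :: real assumes "1/2 \<le> t" "t \<le> 1"
  shows "-18+30*t+39/2*t^2-12*t^3-6*t^4 \<ge> 0"
proof -
  have e: "-18+30*t+39/2*t^2-12*t^3-6*t^4 = (t-1/2)*(36+12*t-15*t^2-6*t^3)"
    by (simp add: algebra_simps power2_eq_square power3_eq_cube power4_eq_xxxx)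
  have t2: "t^2 \<le> 1" using assms by (simp add: power_le_one)
  have t3: "t^3 \<le> 1" using assms by (simp add: power_le_one)
  have "36+12*t-15*t^2-6*t^3 \<ge> 0" using assms t2 t3 by linarith
  moreover have "t - 1/2 \<ge> 0" using assms by simp
  ultimately show ?thesis unfolding e by simp
qed

lemma caseA: fixes t a :: real assumes "1/2 \<le> t" "t \<le> 1" "w1 t a \<le> w2 t a"
 shows "35 * w1 t a \<le> 24 * WW t a"
proof -
  define L where "L = -9+26*t+24*t^2"
  have "t^2 \<ge> 0" by simp
  hence L: "L > 0" unfolding L_def using assms by linarith
  have c: "(2*t+1)*a \<ge> 3/4*t^2+t+2" using assms(3) unfolding w1_def w2_def
    by (simp add: algebra_simps)
  have m: "L * ((2*t+1)*a) \<ge> L * (3/4*t^2+t+2)"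
    using mult_left_mono[OF c] L by simp
  have e: "(2*t+1) * (24 * WW t a - 35 * w1 t a) = L * ((2*t+1)*a) - (2*t+1)*(13*t+87/4*t^2+12*t^3)"
    unfolding w1_def WW_def L_def by (simp add: field_simps power2_eq_square power3_eq_cube)
  have e2: "L * (3/4*t^2+t+2) - (2*t+1)*(13*t+87/4*t^2+12*t^3) = -18+30*t+39/2*t^2-12*t^3-6*t^4"
    unfolding L_def by (simp add: field_simps power2_eq_square power3_eq_cube power4_eq_xxxx)
  have "(2*t+1) * (24 * WW t a - 35 * w1 t a) \<ge> 0"
    using e e2 m p_nonneg[OF assms(1,2)] by linarith
  moreover have "2*t+1 > 0" using assms by simp
  ultimately have "24 * WW t a - 35 * w1 t a \<ge> 0" by (simp add: zero_le_mult_iff)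
  then show ?thesis by simp
qed

lemma caseB: fixes t a :: real assumes "1/2 \<le> t" "t \<le> 1" "w2 t a \<le> w1 t a"
 shows "35 * w2 t a \<le> 24 * WW t a"
proof -
  define M where "M = -44-44*t+24*t^2"
  have t2: "t^2 \<le> 1" using assms by (simp add: power_le_one)
  have M: "M < 0" unfolding M_def using assms t2 by linarith
  have c: "(2*t+1)*a \<le> 3/4*t^2+t+2" using assms(3) unfolding w1_def w2_def
    by (simp add: algebra_simps)
  have m: "M * ((2*t+1)*a) \<ge> M * (3/4*t^2+t+2)"
    using mult_left_mono_neg[OF c] M by simp
  have e: "(2*t+1) * (24 * WW t a - 35 * w2 t a) = M * ((2*t+1)*a) - (2*t+1)*(-70-22*t-9/2*t^2+12*t^3)"
    unfolding w2_def WW_def M_def by (simp add: field_simps power2_eq_square power3_eq_cube)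
  have e2: "M * (3/4*t^2+t+2) - (2*t+1)*(-70-22*t-9/2*t^2+12*t^3) = -18+30*t+39/2*t^2-12*t^3-6*t^4"
    unfolding M_def by (simp add: field_simps power2_eq_square power3_eq_cube power4_eq_xxxx)
  have "(2*t+1) * (24 * WW t a - 35 * w2 t a) \<ge> 0"
    using e e2 m p_nonneg[OF assms(1,2)] by linarith
  moreover have "2*t+1 > 0" using assms by simp
  ultimately have "24 * WW t a - 35 * w2 t a \<ge> 0" by (simp add: zero_le_mult_iff)
  then show ?thesis by simp
qed

theorem lemmaA7:
  fixes t :: real
  assumes "t \<in> {1/2..1}"
  shows "\<forall>a\<in>{(3*t+2)/4..2}. w1 t a < w3 t a \<and> w t a / WW t a \<le> 24/35"
proof
  fix a assume a: "a \<in> {(3*t+2)/4..2}"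
  have t: "1/2 \<le> t" "t \<le> 1" using assms by auto
  have a1: "(3*t+2)/4 \<le> a" using a by auto
  have m6: "(6*t-3)*a \<ge> (6*t-3)*((3*t+2)/4)" using mult_left_mono[OF a1] t by simp
  have "t^2 \<ge> 0" by simp
  hence q: "9*t^2-9*t+10 > 0" using t by linarith
  have d: "w3 t a - w1 t a = (6*t-3)*a - (9*t^2/4 + 3*t - 4)"
    unfolding w1_def w3_def by (simp add: algebra_simps)
  have d2: "(6*t-3)*((3*t+2)/4) - (9*t^2/4 + 3*t - 4) = (9*t^2-9*t+10)/4"
    by (simp add: field_simps power2_eq_square)
  have q4: "(9*t^2-9*t+10)/4 > 0" using q by simp
  have g0: "w3 t a - w1 t a > 0" unfolding d using d2 m6 q4 by linarith
  hence g1: "w1 t a < w3 t a" by simp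
  have ma: "(t+2)*a \<ge> (t+2)*((3*t+2)/4)" using mult_left_mono[OF a1] t by simp
  have e: "(t+2)*((3*t+2)/4) - (t^2/2+t) = (t+2)^2/4"
    by (simp add: algebra_simps power2_eq_square)
  have "(t+2)^2 > 0" using t by simp
  hence "(t+2)*a - (t^2/2+t) > 0" using ma e by linarith
  hence Wp: "WW t a > 0" unfolding WW_def using t by simp
  have "35 * w t a \<le> 24 * WW t a"
  proof (cases "w1 t a \<le> w2 t a")
    case True
    have "w t a \<le> w1 t a" unfolding w_def by simp
    then show ?thesis using caseA[OF t True] by linarith
  next
    case False
    have "w t a \<le> w2 t a" unfolding w_def by simp
    moreover have "w2 t a \<le> w1 t a" using False by simp
    ultimately show ?thesis using caseB[OF t] by fastforce
  qed
  hence "w t a / WW t a \<le> 24/35" using Wp by (simp add: divide_simps)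
  with g1 show "w1 t a < w3 t a \<and> w t a / WW t a \<le> 24/35" by simp
qed

end
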